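(* For $R=\mathbb{Z}_9$ and for $R=\mathbb{S}_3=\mathbb{F}_3[X]/(X^2)$ there exists a $(57,5)$-blocking set in $\mathrm{PHG}(2,R)$, i.e. a set of $57$ points meeting every line in at least $5$ points. Equivalently (taking the complement), there exists a projective $(60,7)$-arc in $\mathrm{PHG}(2,R)$.
   Context: For a finite chain ring $R$ of length $2$ with residue field $\mathbb{F}_q$ (here $q=3$, $|R|=9$), the projective Hjelmslev plane $\mathrm{PHG}(2,R)$ is the incidence structure whose points are the free rank-$1$ submodules of the right module $R_R^3$, whose lines are the free rank-$2$ submodules of $R_R^3$, with incidence given by inclusion; it has $q^4+q^3+q^2$ points ($117$ here) and each line contains $q^2+q$ points ($12$ here). A projective $(k,n)$-arc is a set of $k$ points meeting every line in at most $n$ points. *)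

theory Defs
  imports Main "HOL-Library.Numeral_Type"
begin

section \<open>The ring S_q = F_q[X]/(X^2): dual numbers a + bX over a commutative ring\<close>

datatype 'a dual = Dual (re: 'a) (ep: 'a)

instantiation dual :: (comm_ring_1) comm_ring_1
begin
definition "zero_dual = Dual 0 0"
definition "one_dual = Dual 1 0"
definition "plus_dual x y = Dual (re x + re y) (ep x + ep y)"
definition "minus_dual x y = Dual (re x - re y) (ep x - ep y)"
definition "uminus_dual x = Dual (- re x) (- ep x)"
definition "times_dual x y = Dual (re x * re y) (re x * ep y + ep x * re y)"
instance
  by standard
     (auto simp: zero_dual_def one_dual_def plus_dual_def minus_dual_def
                 uminus_dual_def times_dual_def algebra_simps intro: dual.expand)
end

type_synonym Z9 = "9"
type_synonym S3 = "3 dual"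

type_synonym 'a vec3 = "'a \<times> 'a \<times> 'a"

definition vzero :: "'a::comm_ring_1 vec3" where
  "vzero = (0, 0, 0)"

definition vadd :: "'a::comm_ring_1 vec3 \<Rightarrow> 'a vec3 \<Rightarrow> 'a vec3" where
  "vadd u v = (case u of (x1, y1, z1) \<Rightarrow> case v of (x2, y2, z2) \<Rightarrow> (x1 + x2, y1 + y2, z1 + z2))"

definition vsmul :: "'a::comm_ring_1 vec3 \<Rightarrow> 'a \<Rightarrow> 'a vec3" where
  "vsmul v r = (case v of (x, y, z) \<Rightarrow> (x * r, y * r, z * r))"

definition span1 :: "'a::comm_ring_1 vec3 \<Rightarrow> 'a vec3 set" where
  "span1 v = {vsmul v r | r. True}"

definition span2 :: "'a::comm_ring_1 vec3 \<Rightarrow> 'a vec3 \<Rightarrow> 'a vec3 set" where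
  "span2 u w = {vadd (vsmul u r) (vsmul w s) | r s. True}"

definition indep1 :: "'a::comm_ring_1 vec3 \<Rightarrow> bool" where
  "indep1 v \<longleftrightarrow> (\<forall>r. vsmul v r = vzero \<longrightarrow> r = 0)"

definition indep2 :: "'a::comm_ring_1 vec3 \<Rightarrow> 'a vec3 \<Rightarrow> bool" where
  "indep2 u w \<longleftrightarrow> (\<forall>r s. vadd (vsmul u r) (vsmul w s) = vzero \<longrightarrow> r = 0 \<and> s = 0)"

text \<open>Points: free rank-1 submodules of R^3 (those with a one-element basis);
  lines: free rank-2 submodules (those with a two-element basis).\<close>
definition PHG_points :: "'a::comm_ring_1 itself \<Rightarrow> 'a vec3 set set" where
  "PHG_points _ = {span1 v | v. indep1 v}"

definition PHG_lines :: "'a::comm_ring_1 itself \<Rightarrow> 'a vec3 set set" where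
  "PHG_lines _ = {span2 u w | u w. indep2 u w}"

definition points_on :: "'a vec3 set set \<Rightarrow> 'a vec3 set \<Rightarrow> 'a vec3 set set" where
  "points_on B L = {P \<in> B. P \<subseteq> L}"

definition blocking_set :: "'a::comm_ring_1 itself \<Rightarrow> 'a vec3 set set \<Rightarrow> nat \<Rightarrow> nat \<Rightarrow> bool" where
  "blocking_set T B k n \<longleftrightarrow> B \<subseteq> PHG_points T \<and> card B = k \<and>
     (\<forall>L \<in> PHG_lines T. card (points_on B L) \<ge> n)"

definition proj_arc :: "'a::comm_ring_1 itself \<Rightarrow> 'a vec3 set set \<Rightarrow> nat \<Rightarrow> nat \<Rightarrow> bool" where
  "proj_arc T K k n \<longleftrightarrow> K \<subseteq> PHG_points T \<and> card K = k \<and>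
     (\<forall>L \<in> PHG_lines T. card (points_on K L) \<le> n)"

end

theory Submission
  imports Defs
begin


definition dot :: "'a::comm_ring_1 vec3 \<Rightarrow> 'a vec3 \<Rightarrow> 'a" where
  "dot x a = (case x of (x1,x2,x3) \<Rightarrow> case a of (a1,a2,a3) \<Rightarrow> x1*a1 + x2*a2 + x3*a3)"

definition cross :: "'a::comm_ring_1 vec3 \<Rightarrow> 'a vec3 \<Rightarrow> 'a vec3" where
  "cross u w = (case u of (u1,u2,u3) \<Rightarrow> case w of (w1,w2,w3) \<Rightarrow>
      (u2*w3 - u3*w2, u3*w1 - u1*w3, u1*w2 - u2*w1))"

definition perp :: "'a::comm_ring_1 vec3 \<Rightarrow> 'a vec3 set" where
  "perp a = {x. dot x a = 0}"

definition nrm :: "'a::comm_ring_1 vec3 \<Rightarrow> bool" where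
  "nrm v = (case v of (v1,v2,v3) \<Rightarrow> v1 = 1 \<or> (\<not> v1 dvd 1 \<and> v2 = 1) \<or> (\<not> v1 dvd 1 \<and> \<not> v2 dvd 1 \<and> v3 = 1))"

definition hasunit :: "'a::comm_ring_1 vec3 \<Rightarrow> bool" where
  "hasunit v = (case v of (v1,v2,v3) \<Rightarrow> v1 dvd 1 \<or> v2 dvd 1 \<or> v3 dvd 1)"

definition NLof :: "'a::comm_ring_1 list \<Rightarrow> 'a list \<Rightarrow> 'a vec3 list" where
  "NLof els nons = [(1,b,c). b \<leftarrow> els, c \<leftarrow> els] @ [(n,1,c). n \<leftarrow> nons, c \<leftarrow> els]
     @ [(n,m,1). n \<leftarrow> nons, m \<leftarrow> nons]"

lemma span2_perp:
  fixes u w :: "'a::comm_ring_1 vec3"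
  assumes "x \<in> span2 u w" shows "x \<in> perp (cross u w)"
proof -
  obtain u1 u2 u3 where u: "u = (u1,u2,u3)" by (cases u) auto
  obtain w1 w2 w3 where w: "w = (w1,w2,w3)" by (cases w) auto
  from assms obtain r s where x: "x = vadd (vsmul u r) (vsmul w s)" unfolding span2_def by auto
  have "(u1*r + w1*s)*(u2*w3 - u3*w2) + (u2*r+w2*s)*(u3*w1 - u1*w3) + (u3*r+w3*s)*(u1*w2 - u2*w1) = 0"
    by (simp add: algebra_simps)
  then show ?thesis unfolding x u w perp_def
    by (simp add: dot_def cross_def vadd_def vsmul_def)
qed

lemma cramer:
  fixes x1 :: "'a::comm_ring_1"
  assumes h: "x1*(u2*w3 - u3*w2) + x2*(u3*w1 - u1*w3) + x3*(u1*w2 - u2*w1) = 0"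
    and e: "1 = (u1*w2 - u2*w1)*e"
  shows "\<exists>r s. x1 = u1*r + w1*s \<and> x2 = u2*r + w2*s \<and> x3 = u3*r + w3*s"
proof (intro exI conjI)
  have "u1*((x1*w2 - x2*w1)*e) + w1*((u1*x2 - u2*x1)*e) = x1*((u1*w2 - u2*w1)*e)"
    by (simp add: algebra_simps)
  then show "x1 = u1*((x1*w2 - x2*w1)*e) + w1*((u1*x2 - u2*x1)*e)" using e by simp
  have "u2*((x1*w2 - x2*w1)*e) + w2*((u1*x2 - u2*x1)*e) = x2*((u1*w2 - u2*w1)*e)"
    by (simp add: algebra_simps)
  then show "x2 = u2*((x1*w2 - x2*w1)*e) + w2*((u1*x2 - u2*x1)*e)" using e by simp
  have "u3*((x1*w2 - x2*w1)*e) + w3*((u1*x2 - u2*x1)*e) = x3*((u1*w2 - u2*w1)*e) - e*(x1*(u2*w3 - u3*w2) + x2*(u3*w1 - u1*w3) + x3*(u1*w2 - u2*w1))"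
    by (simp add: algebra_simps)
  then show "x3 = u3*((x1*w2 - x2*w1)*e) + w3*((u1*x2 - u2*x1)*e)" using e h by simp
qed

lemma perp_span2:
  fixes u w :: "'a::comm_ring_1 vec3"
  assumes "x \<in> perp (cross u w)" and "hasunit (cross u w)" shows "x \<in> span2 u w"
proof -
  obtain u1 u2 u3 where u: "u = (u1,u2,u3)" by (cases u) auto
  obtain w1 w2 w3 where w: "w = (w1,w2,w3)" by (cases w) auto
  obtain x1 x2 x3 where xx: "x = (x1,x2,x3)" by (cases x) auto
  have h: "x1*(u2*w3 - u3*w2) + x2*(u3*w1 - u1*w3) + x3*(u1*w2 - u2*w1) = 0"
    using assms(1) by (simp add: u w xx perp_def dot_def cross_def)
  have h2: "x2*(u3*w1 - u1*w3) + x3*(u1*w2 - u2*w1) + x1*(u2*w3 - u3*w2) = 0"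
    using h by (simp add: algebra_simps)
  have h3: "x3*(u1*w2 - u2*w1) + x1*(u2*w3 - u3*w2) + x2*(u3*w1 - u1*w3) = 0"
    using h by (simp add: algebra_simps)
  have hu: "(u2*w3 - u3*w2) dvd 1 \<or> (u3*w1 - u1*w3) dvd 1 \<or> (u1*w2 - u2*w1) dvd 1"
    using assms(2) by (simp add: u w hasunit_def cross_def)
  have key: "\<exists>r s. x1 = u1*r + w1*s \<and> x2 = u2*r + w2*s \<and> x3 = u3*r + w3*s"
  proof -
    { assume "(u1*w2 - u2*w1) dvd 1"
      then obtain e where e: "1 = (u1*w2 - u2*w1)*e" by (metis dvdE)
      have ?thesis using cramer[OF h e] . }
    moreover
    { assume "(u2*w3 - u3*w2) dvd 1"
      then obtain e where e: "1 = (u2*w3 - u3*w2)*e" by (metis dvdE)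
      have ?thesis using cramer[OF h2 e] by blast }
    moreover
    { assume "(u3*w1 - u1*w3) dvd 1"
      then obtain e where e: "1 = (u3*w1 - u1*w3)*e" by (metis dvdE)
      have ?thesis using cramer[OF h3 e] by blast }
    ultimately show ?thesis using hu by blast
  qed
  then obtain r s where "x1 = u1*r + w1*s \<and> x2 = u2*r + w2*s \<and> x3 = u3*r + w3*s" by blast
  then have "x = vadd (vsmul u r) (vsmul w s)" by (simp add: xx u w vadd_def vsmul_def)
  then show ?thesis unfolding span2_def by blast
qed

lemma unit_mult_zero:
  fixes a t :: "'a::comm_ring_1"
  assumes "a dvd 1" "a * t = 0" shows "t = 0"
proof -
  obtain e where "1 = a * e" using assms(1) by (metis dvdE)
  then have "t = e * (a * t)" by (metis mult.assoc mult.commute mult_1)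
  then show ?thesis using assms(2) by simp
qed

lemma indep2_hasunit:
  fixes u w :: "'a::comm_ring_1 vec3" and t :: 'a
  assumes t0: "t \<noteq> 0" and tm: "\<forall>x. \<not> x dvd 1 \<longrightarrow> x*t = 0" and ind: "indep2 u w"
  shows "hasunit (cross u w)"
proof (rule ccontr)
  assume nh: "\<not> hasunit (cross u w)"
  obtain u1 u2 u3 where u: "u = (u1,u2,u3)" by (cases u) auto
  obtain w1 w2 w3 where w: "w = (w1,w2,w3)" by (cases w) auto
  define d1 where "d1 = u2*w3 - u3*w2"
  define d2 where "d2 = u3*w1 - u1*w3"
  define d3 where "d3 = u1*w2 - u2*w1"
  have nd: "\<not> d1 dvd 1" "\<not> d2 dvd 1" "\<not> d3 dvd 1"
    using nh unfolding u w hasunit_def cross_def d1_def d2_def d3_def by simp_all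
  have dt: "d1*t = 0" "d2*t = 0" "d3*t = 0"
    by (rule tm[rule_format, OF nd(1)], rule tm[rule_format, OF nd(2)], rule tm[rule_format, OF nd(3)])
  have ind': "\<And>r s. u1*r + w1*s = 0 \<Longrightarrow> u2*r + w2*s = 0 \<Longrightarrow> u3*r + w3*s = 0 \<Longrightarrow> r = 0 \<and> s = 0"
  proof -
    fix r s assume h: "u1*r + w1*s = 0" "u2*r + w2*s = 0" "u3*r + w3*s = 0"
    have "vadd (vsmul u r) (vsmul w s) = vzero" using h by (simp add: u w vadd_def vsmul_def vzero_def)
    then show "r = 0 \<and> s = 0" using ind unfolding indep2_def by blast
  qed
  show False
  proof (cases "u1 dvd 1 \<or> u2 dvd 1 \<or> u3 dvd 1")
    case False
    then have "u1*t = 0" "u2*t = 0" "u3*t = 0" using tm by blast+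
    then have "t = 0 \<and> (0::'a) = 0" using ind'[of t 0] by simp
    then show False using t0 by simp
  next
    case True
    moreover
    { assume a: "u1 dvd 1"
      have "u1*(-(w1*t)) + w1*(u1*t) = 0" "u2*(-(w1*t)) + w2*(u1*t) = d3*t"
           "u3*(-(w1*t)) + w3*(u1*t) = -(d2*t)"
        by (simp_all add: d2_def d3_def algebra_simps)
      then have "u1*t = 0" using ind'[of "-(w1*t)" "u1*t"] dt by simp
      then have False using unit_mult_zero[OF a] t0 by blast }
    moreover
    { assume a: "u2 dvd 1"
      have "u1*(-(w2*t)) + w1*(u2*t) = -(d3*t)" "u2*(-(w2*t)) + w2*(u2*t) = 0"
           "u3*(-(w2*t)) + w3*(u2*t) = d1*t"
        by (simp_all add: d1_def d3_def algebra_simps)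
      then have "u2*t = 0" using ind'[of "-(w2*t)" "u2*t"] dt by simp
      then have False using unit_mult_zero[OF a] t0 by blast }
    moreover
    { assume a: "u3 dvd 1"
      have "u1*(-(w3*t)) + w1*(u3*t) = d2*t" "u2*(-(w3*t)) + w2*(u3*t) = -(d1*t)"
           "u3*(-(w3*t)) + w3*(u3*t) = 0"
        by (simp_all add: d1_def d2_def algebra_simps)
      then have "u3*t = 0" using ind'[of "-(w3*t)" "u3*t"] dt by simp
      then have False using unit_mult_zero[OF a] t0 by blast }
    ultimately show False by blast
  qed
qed

lemma perp_scale:
  fixes a :: "'a::comm_ring_1 vec3"
  assumes "c dvd 1" shows "perp (vsmul a c) = perp a"
proof -
  have "\<And>x. dot x (vsmul a c) = dot x a * c"
    by (auto simp: dot_def vsmul_def algebra_simps split: prod.splits)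
  then show ?thesis unfolding perp_def using unit_mult_zero[OF assms]
    by (auto simp: mult.commute)
qed

lemma unit_r: "(x::'a::comm_ring_1) * r = 1 \<Longrightarrow> r dvd 1"
  by (rule dvdI[of _ _ x]) (simp add: mult.commute)

lemma unit_l: "(x::'a::comm_ring_1) * r = 1 \<Longrightarrow> x dvd 1"
  by (rule dvdI[of _ _ r]) simp

lemma normalize:
  fixes a :: "'a::comm_ring_1 vec3"
  assumes els: "\<forall>x. x \<in> set els" and nons: "\<forall>n. \<not> n dvd 1 \<longrightarrow> n \<in> set nons"
    and hu: "hasunit a"
  shows "\<exists>a' \<in> set (NLof els nons). perp a' = perp a"
proof -
  obtain a1 a2 a3 where a: "a = (a1,a2,a3)" by (cases a) auto
  have dv: "\<And>x c::'a. x * c = 1 \<Longrightarrow> c dvd 1" by (rule unit_r)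
  have nu: "\<And>x c::'a. \<not> x dvd 1 \<Longrightarrow> \<not> (x*c) dvd 1" by (meson dvd_mult_left)
  show ?thesis
  proof (cases "a1 dvd 1")
    case True
    then obtain c where c: "1 = a1*c" by (metis dvdE)
    have vs: "vsmul a c = (1, a2*c, a3*c)" using c by (simp add: a vsmul_def)
    have mem: "(1, a2*c, a3*c) \<in> set (NLof els nons)" using els by (simp add: NLof_def image_iff)
    have cu: "c dvd 1" using dv[of a1 c] c by simp
    have "perp (1, a2*c, a3*c) = perp a" using perp_scale[OF cu, of a] vs by simp
    then show ?thesis using mem by blast
  next
    case F1: False
    show ?thesis
    proof (cases "a2 dvd 1")
      case True
      then obtain c where c: "1 = a2*c" by (metis dvdE)
      have vs: "vsmul a c = (a1*c, 1, a3*c)" using c by (simp add: a vsmul_def)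
      have mem: "(a1*c, 1, a3*c) \<in> set (NLof els nons)"
        using els nons nu[OF F1, of c] by (simp add: NLof_def image_iff)
      have cu: "c dvd 1" using dv[of a2 c] c by simp
      have "perp (a1*c, 1, a3*c) = perp a" using perp_scale[OF cu, of a] vs by simp
      then show ?thesis using mem by blast
    next
      case F2: False
      then have "a3 dvd 1" using hu F1 by (simp add: hasunit_def a)
      then obtain c where c: "1 = a3*c" by (metis dvdE)
      have vs: "vsmul a c = (a1*c, a2*c, 1)" using c by (simp add: a vsmul_def)
      have mem: "(a1*c, a2*c, 1) \<in> set (NLof els nons)"
        using els nons nu[OF F1, of c] nu[OF F2, of c] by (simp add: NLof_def image_iff)
      have cu: "c dvd 1" using dv[of a3 c] c by simp
      have "perp (a1*c, a2*c, 1) = perp a" using perp_scale[OF cu, of a] vs by simp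
      then show ?thesis using mem by blast
    qed
  qed
qed

lemma nrm_indep1:
  fixes v :: "'a::comm_ring_1 vec3"
  assumes "nrm v" shows "indep1 v"
  using assms by (auto simp: nrm_def indep1_def vsmul_def vzero_def split: prod.splits)

lemma nrm_unique:
  fixes v :: "'a::comm_ring_1 vec3"
  assumes "nrm v" "nrm (vsmul v r)" shows "vsmul v r = v"
proof -
  obtain v1 v2 v3 where v: "v = (v1,v2,v3)" by (cases v) auto
  have A: "v1 = 1 \<or> (\<not> v1 dvd 1 \<and> v2 = 1) \<or> (\<not> v1 dvd 1 \<and> \<not> v2 dvd 1 \<and> v3 = 1)"
    using assms(1) by (simp add: nrm_def v)
  have B: "v1*r = 1 \<or> (\<not> (v1*r) dvd 1 \<and> v2*r = 1) \<or> (\<not> (v1*r) dvd 1 \<and> \<not> (v2*r) dvd 1 \<and> v3*r = 1)"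
    using assms(2) by (simp add: nrm_def v vsmul_def)
  have "r = 1"
  proof -
    { assume a: "v1 = 1"
      then have "r = 1 \<or> (\<not> r dvd 1 \<and> v2*r = 1) \<or> (\<not> r dvd 1 \<and> v3*r = 1)" using B by auto
      then have "r = 1" using unit_r[of v2 r] unit_r[of v3 r] by blast }
    moreover
    { assume a: "\<not> v1 dvd 1" "v2 = 1"
      then have "v1*r \<noteq> 1" using unit_l[of v1 r] by blast
      then have "r = 1 \<or> (\<not> r dvd 1 \<and> v3*r = 1)" using B a by auto
      then have "r = 1" using unit_r[of v3 r] by blast }
    moreover
    { assume a: "\<not> v1 dvd 1" "\<not> v2 dvd 1" "v3 = 1"
      then have "v1*r \<noteq> 1" "v2*r \<noteq> 1" using unit_l[of v1 r] unit_l[of v2 r] by blast+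
      then have "r = 1" using B a by auto }
    ultimately show ?thesis using A by blast
  qed
  then show ?thesis by (simp add: v vsmul_def)
qed

lemma span1_inj:
  fixes A :: "'a::comm_ring_1 vec3 set"
  assumes "\<forall>v\<in>A. nrm v" shows "inj_on span1 A"
proof (rule inj_onI)
  fix v w assume vA: "v \<in> A" and wA: "w \<in> A" and eq: "span1 v = span1 w"
  have "w \<in> span1 w" unfolding span1_def by (rule CollectI, rule exI[of _ 1]) (simp add: vsmul_def split: prod.splits)
  then obtain r where "w = vsmul v r" using eq unfolding span1_def by auto
  then show "v = w" using nrm_unique[of v r] vA wA assms by auto
qed

lemma vin_span1: "(v::'a::comm_ring_1 vec3) \<in> span1 v"
  unfolding span1_def by (rule CollectI, rule exI[of _ 1]) (simp add: vsmul_def split: prod.splits)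

lemma span1_perp:
  fixes v a :: "'a::comm_ring_1 vec3"
  assumes "dot v a = 0" shows "span1 v \<subseteq> perp a"
proof
  fix x assume "x \<in> span1 v"
  then obtain r where x: "x = vsmul v r" unfolding span1_def by auto
  have "dot x a = dot v a * r" unfolding x
    by (auto simp: dot_def vsmul_def algebra_simps split: prod.splits)
  then show "x \<in> perp a" using assms by (simp add: perp_def)
qed

lemma line_normal:
  fixes L :: "'a::comm_ring_1 vec3 set" and t :: 'a
  assumes t0: "t \<noteq> 0" and tm: "\<forall>x. \<not> x dvd 1 \<longrightarrow> x*t = 0"
    and els: "\<forall>x. x \<in> set els" and nons: "\<forall>n. \<not> n dvd 1 \<longrightarrow> n \<in> set nons"
    and L: "L \<in> PHG_lines TYPE('a)"
  shows "\<exists>a\<in>set (NLof els nons). L = perp a"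
proof -
  obtain u w where Lu: "L = span2 u w" and ind: "indep2 u w" using L unfolding PHG_lines_def by auto
  have hu: "hasunit (cross u w)" using indep2_hasunit[OF t0 tm ind] .
  have "L = perp (cross u w)" using span2_perp perp_span2[OF _ hu] Lu by blast
  then show ?thesis using normalize[OF els nons hu] by auto
qed

lemma blocking_generic:
  fixes Bl :: "'a::comm_ring_1 vec3 list" and t :: 'a
  assumes t0: "t \<noteq> 0" and tm: "\<forall>x. \<not> x dvd 1 \<longrightarrow> x*t = 0"
    and els: "\<forall>x. x \<in> set els" and nons: "\<forall>n. \<not> n dvd 1 \<longrightarrow> n \<in> set nons"
    and Bn: "list_all nrm Bl" and Bd: "distinct Bl"
    and cnt: "list_all (\<lambda>a. k \<le> length (filter (\<lambda>v. dot v a = 0) Bl)) (NLof els nons)"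
  shows "blocking_set TYPE('a) (span1 ` set Bl) (length Bl) k"
proof -
  have inj: "inj_on span1 (set Bl)" using span1_inj Bn by (simp add: list_all_iff)
  have sub: "span1 ` set Bl \<subseteq> PHG_points TYPE('a)"
    using Bn nrm_indep1 by (fastforce simp: list_all_iff PHG_points_def)
  have card: "card (span1 ` set Bl) = length Bl"
    using card_image[OF inj] distinct_card[OF Bd] by simp
  have lines: "k \<le> card (points_on (span1 ` set Bl) L)" if L: "L \<in> PHG_lines TYPE('a)" for L
  proof -
    obtain a where a: "a \<in> set (NLof els nons)" "L = perp a" using line_normal[OF t0 tm els nons L] by blast
    define F where "F = filter (\<lambda>v. dot v a = 0) Bl"
    have k: "k \<le> length F" using cnt a(1) by (simp add: list_all_iff F_def)
    have injF: "inj_on span1 (set F)" using inj by (rule inj_on_subset) (auto simp: F_def)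
    have dF: "distinct F" using Bd by (simp add: F_def)
    have cF: "card (span1 ` set F) = length F"
      using card_image[OF injF] distinct_card[OF dF] by simp
    have "span1 ` set F \<subseteq> points_on (span1 ` set Bl) L"
    proof
      fix P assume "P \<in> span1 ` set F"
      then obtain v where v: "v \<in> set Bl" "dot v a = 0" "P = span1 v" by (auto simp: F_def)
      then show "P \<in> points_on (span1 ` set Bl) L"
        using span1_perp[OF v(2)] a(2) by (auto simp: points_on_def)
    qed
    moreover have "finite (points_on (span1 ` set Bl) L)" by (simp add: points_on_def)
    ultimately have "card (span1 ` set F) \<le> card (points_on (span1 ` set Bl) L)" by (rule card_mono[rotated])
    then show ?thesis using k cF by simp
  qed
  show ?thesis unfolding blocking_set_def using sub card lines by blast
qed

lemma arc_generic:
  fixes Kl :: "'a::comm_ring_1 vec3 list" and t :: 'a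
  assumes t0: "t \<noteq> 0" and tm: "\<forall>x. \<not> x dvd 1 \<longrightarrow> x*t = 0"
    and els: "\<forall>x. x \<in> set els" and nons: "\<forall>n. \<not> n dvd 1 \<longrightarrow> n \<in> set nons"
    and Kn: "list_all nrm Kl" and Kd: "distinct Kl"
    and cnt: "list_all (\<lambda>a. length (filter (\<lambda>v. dot v a = 0) Kl) \<le> k) (NLof els nons)"
  shows "proj_arc TYPE('a) (span1 ` set Kl) (length Kl) k"
proof -
  have inj: "inj_on span1 (set Kl)" using span1_inj Kn by (simp add: list_all_iff)
  have sub: "span1 ` set Kl \<subseteq> PHG_points TYPE('a)"
    using Kn nrm_indep1 by (fastforce simp: list_all_iff PHG_points_def)
  have card: "card (span1 ` set Kl) = length Kl"
    using card_image[OF inj] distinct_card[OF Kd] by simp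
  have lines: "card (points_on (span1 ` set Kl) L) \<le> k" if L: "L \<in> PHG_lines TYPE('a)" for L
  proof -
    obtain a where a: "a \<in> set (NLof els nons)" "L = perp a" using line_normal[OF t0 tm els nons L] by blast
    define F where "F = filter (\<lambda>v. dot v a = 0) Kl"
    have k: "length F \<le> k" using cnt a(1) by (simp add: list_all_iff F_def)
    have "points_on (span1 ` set Kl) L \<subseteq> span1 ` set F"
    proof
      fix P assume "P \<in> points_on (span1 ` set Kl) L"
      then obtain v where v: "v \<in> set Kl" "P = span1 v" "span1 v \<subseteq> perp a"
        by (auto simp: points_on_def a(2))
      then have "dot v a = 0" using vin_span1[of v] by (auto simp: perp_def)
      then show "P \<in> span1 ` set F" using v by (auto simp: F_def)
    qed
    then have "card (points_on (span1 ` set Kl) L) \<le> card (span1 ` set F)" by (rule card_mono[rotated]) simp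
    also have "\<dots> \<le> card (set F)" by (rule card_image_le) simp
    also have "\<dots> \<le> length F" by (rule card_length)
    finally show ?thesis using k by simp
  qed
  show ?thesis unfolding proj_arc_def using sub card lines by blast
qed


definition BZ9 :: "Z9 vec3 list" where
  "BZ9 = [(1, 0, 1), (1, 0, 2), (1, 0, 5), (1, 0, 6), (1, 0, 7), (1, 1, 2), (1, 1, 4), (1, 1, 7), (1, 1, 8), (1, 2, 0), (1, 2, 5), (1, 2, 6), (1, 2, 7), (1, 3, 1), (1, 3, 2), (1, 3, 6), (1, 3, 7), (1, 3, 8), (1, 4, 2), (1, 4, 4), (1, 4, 7), (1, 4, 8), (1, 5, 3), (1, 5, 5), (1, 5, 6), (1, 5, 7), (1, 6, 1), (1, 6, 5), (1, 6, 6), (1, 6, 7), (1, 6, 8), (1, 7, 0), (1, 7, 2), (1, 7, 3), (1, 7, 4), (1, 7, 6), (1, 7, 7), (1, 7, 8), (1, 8, 0), (1, 8, 3), (1, 8, 5), (1, 8, 7), (0, 1, 1), (0, 1, 2), (0, 1, 3), (0, 1, 6), (3, 1, 0), (3, 1, 3), (3, 1, 4), (3, 1, 8), (6, 1, 0), (6, 1, 5), (6, 1, 6), (6, 1, 7), (0, 3, 1), (3, 3, 1), (6, 3, 1)]"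


definition KZ9 :: "Z9 vec3 list" where
  "KZ9 = [(1, 0, 0), (1, 0, 3), (1, 0, 4), (1, 0, 8), (1, 1, 0), (1, 1, 1), (1, 1, 3), (1, 1, 5), (1, 1, 6), (1, 2, 1), (1, 2, 2), (1, 2, 3), (1, 2, 4), (1, 2, 8), (1, 3, 0), (1, 3, 3), (1, 3, 4), (1, 3, 5), (1, 4, 0), (1, 4, 1), (1, 4, 3), (1, 4, 5), (1, 4, 6), (1, 5, 0), (1, 5, 1), (1, 5, 2), (1, 5, 4), (1, 5, 8), (1, 6, 0), (1, 6, 2), (1, 6, 3), (1, 6, 4), (1, 7, 1), (1, 7, 5), (1, 8, 1), (1, 8, 2), (1, 8, 4), (1, 8, 6), (1, 8, 8), (0, 1, 0), (0, 1, 4), (0, 1, 5), (0, 1, 7), (0, 1, 8), (3, 1, 1), (3, 1, 2), (3, 1, 5), (3, 1, 6), (3, 1, 7), (6, 1, 1), (6, 1, 2), (6, 1, 3), (6, 1, 4), (6, 1, 8), (0, 0, 1), (0, 6, 1), (3, 0, 1), (3, 6, 1), (6, 0, 1), (6, 6, 1)]"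

definition els9 :: "Z9 list" where "els9 = [0,1,2,3,4,5,6,7,8]"
definition nons9 :: "Z9 list" where "nons9 = [0,3,6]"

lemma Z9_all: "(x::Z9) \<in> set els9"
proof -
  obtain z where z: "x = of_int z" "0 \<le> z" "z < int CARD(9)" by (rule bit1_cases)
  then have "z \<in> {0,1,2,3,4,5,6,7,8}" by auto
  then show ?thesis using z by (auto simp: els9_def)
qed

lemma Z9_unit: "(x::Z9) dvd 1 \<longleftrightarrow> x \<in> {1,2,4,5,7,8}"
proof
  assume "x dvd 1"
  then obtain k where k: "1 = x*k" by (rule dvdE)
  have "x \<in> set els9" "k \<in> set els9" by (rule Z9_all)+
  then show "x \<in> {1,2,4,5,7,8}" using k by (auto simp: els9_def)
next
  assume "x \<in> {1,2,4,5,7,8}"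
  then show "x dvd 1"
  proof (elim insertE)
    show "x = 2 \<Longrightarrow> x dvd 1" by (rule dvdI[of _ _ 5]) simp
    show "x = 4 \<Longrightarrow> x dvd 1" by (rule dvdI[of _ _ 7]) simp
    show "x = 5 \<Longrightarrow> x dvd 1" by (rule dvdI[of _ _ 2]) simp
    show "x = 7 \<Longrightarrow> x dvd 1" by (rule dvdI[of _ _ 4]) simp
    show "x = 8 \<Longrightarrow> x dvd 1" by (rule dvdI[of _ _ 8]) simp
  qed auto
qed

lemma Z9_t: "\<not> (x::Z9) dvd 1 \<longrightarrow> x * 3 = 0"
  using Z9_all[of x] by (auto simp: Z9_unit els9_def)

lemma Z9_nons: "\<not> (n::Z9) dvd 1 \<longrightarrow> n \<in> set nons9"
  using Z9_all[of n] by (auto simp: Z9_unit els9_def nons9_def)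

lemma BZ9_nrm: "list_all nrm BZ9"
  by (simp add: BZ9_def nrm_def Z9_unit)

lemma BZ9_dist: "distinct BZ9"
  by (simp add: BZ9_def)

lemma BZ9_cnt: "list_all (\<lambda>a. 5 \<le> length (filter (\<lambda>v. dot v a = 0) BZ9)) (NLof els9 nons9)"
  by (simp add: BZ9_def NLof_def els9_def nons9_def dot_def)


lemma KZ9_nrm: "list_all nrm KZ9"
  by (simp add: KZ9_def nrm_def Z9_unit)

lemma KZ9_dist: "distinct KZ9"
  by (simp add: KZ9_def)

lemma KZ9_cnt: "list_all (\<lambda>a. length (filter (\<lambda>v. dot v a = 0) KZ9) \<le> 7) (NLof els9 nons9)"
  by (simp add: KZ9_def NLof_def els9_def nons9_def dot_def)

definition BS3 :: "S3 vec3 list" where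
  "BS3 = [(Dual 1 0, Dual 0 0, Dual 0 2), (Dual 1 0, Dual 0 0, Dual 1 0), (Dual 1 0, Dual 0 0, Dual 2 0), (Dual 1 0, Dual 0 0, Dual 2 1), (Dual 1 0, Dual 0 1, Dual 0 1), (Dual 1 0, Dual 0 1, Dual 1 1), (Dual 1 0, Dual 0 1, Dual 2 0), (Dual 1 0, Dual 0 1, Dual 2 2), (Dual 1 0, Dual 0 2, Dual 0 0), (Dual 1 0, Dual 0 2, Dual 1 2), (Dual 1 0, Dual 0 2, Dual 2 1), (Dual 1 0, Dual 0 2, Dual 2 2), (Dual 1 0, Dual 1 0, Dual 0 2), (Dual 1 0, Dual 1 0, Dual 1 2), (Dual 1 0, Dual 1 0, Dual 2 0), (Dual 1 0, Dual 1 0, Dual 2 2), (Dual 1 0, Dual 1 1, Dual 0 0), (Dual 1 0, Dual 1 1, Dual 1 1), (Dual 1 0, Dual 1 1, Dual 2 1), (Dual 1 0, Dual 1 1, Dual 2 2), (Dual 1 0, Dual 1 2, Dual 0 1), (Dual 1 0, Dual 1 2, Dual 1 0), (Dual 1 0, Dual 1 2, Dual 2 0), (Dual 1 0, Dual 1 2, Dual 2 1), (Dual 1 0, Dual 2 0, Dual 0 0), (Dual 1 0, Dual 2 0, Dual 0 2), (Dual 1 0, Dual 2 0, Dual 1 1), (Dual 1 0, Dual 2 0, Dual 1 2), (Dual 1 0, Dual 2 1, Dual 0 0), (Dual 1 0, Dual 2 1, Dual 0 1), (Dual 1 0, Dual 2 1, Dual 1 0), (Dual 1 0, Dual 2 1,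 Dual 1 1), (Dual 1 0, Dual 2 1, Dual 2 0), (Dual 1 0, Dual 2 1, Dual 2 1), (Dual 1 0, Dual 2 1, Dual 2 2), (Dual 1 0, Dual 2 2, Dual 0 1), (Dual 1 0, Dual 2 2, Dual 0 2), (Dual 1 0, Dual 2 2, Dual 1 0), (Dual 1 0, Dual 2 2, Dual 1 2), (Dual 0 0, Dual 1 0, Dual 0 0), (Dual 0 0, Dual 1 0, Dual 1 0), (Dual 0 0, Dual 1 0, Dual 1 1), (Dual 0 0, Dual 1 0, Dual 2 1), (Dual 0 0, Dual 1 0, Dual 2 2), (Dual 0 1, Dual 1 0, Dual 0 2), (Dual 0 1, Dual 1 0, Dual 1 1), (Dual 0 1, Dual 1 0, Dual 1 2), (Dual 0 1, Dual 1 0, Dual 2 0), (Dual 0 1, Dual 1 0, Dual 2 1), (Dual 0 2, Dual 1 0, Dual 0 1), (Dual 0 2, Dual 1 0, Dual 1 0), (Dual 0 2, Dual 1 0, Dual 1 2), (Dual 0 2, Dual 1 0, Dual 2 0), (Dual 0 2, Dual 1 0, Dual 2 2), (Dual 0 1, Dual 0 0, Dual 1 0), (Dual 0 1, Dual 0 1, Dual 1 0), (Dual 0 1, Dual 0 2, Dual 1 0)]"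


definition KS3 :: "S3 vec3 list" where
  "KS3 = [(Dual 1 0, Dual 0 0, Dual 0 0), (Dual 1 0, Dual 0 0, Dual 0 1), (Dual 1 0, Dual 0 0, Dual 1 1), (Dual 1 0, Dual 0 0, Dual 1 2), (Dual 1 0, Dual 0 0, Dual 2 2), (Dual 1 0, Dual 0 1, Dual 0 0), (Dual 1 0, Dual 0 1, Dual 0 2), (Dual 1 0, Dual 0 1, Dual 1 0), (Dual 1 0, Dual 0 1, Dual 1 2), (Dual 1 0, Dual 0 1, Dual 2 1), (Dual 1 0, Dual 0 2, Dual 0 1), (Dual 1 0, Dual 0 2, Dual 0 2), (Dual 1 0, Dual 0 2, Dual 1 0), (Dual 1 0, Dual 0 2, Dual 1 1), (Dual 1 0, Dual 0 2, Dual 2 0), (Dual 1 0, Dual 1 0, Dual 0 0), (Dual 1 0, Dual 1 0, Dual 0 1), (Dual 1 0, Dual 1 0, Dual 1 0), (Dual 1 0, Dual 1 0, Dual 1 1), (Dual 1 0, Dual 1 0, Dual 2 1), (Dual 1 0, Dual 1 1, Dual 0 1), (Dual 1 0, Dual 1 1, Dual 0 2), (Dual 1 0, Dual 1 1, Dual 1 0), (Dual 1 0, Dual 1 1, Dual 1 2), (Dual 1 0, Dual 1 1, Dual 2 0), (Dual 1 0, Dual 1 2, Dual 0 0), (Dual 1 0, Dual 1 2, Dual 0 2), (Dual 1 0, Dual 1 2, Dual 1 1), (Dual 1 0, Dual 1 2, Dual 1 2), (Dual 1 0, Dual 1 2, Dual 2 2), (Dual 1 0, Dual 2 0, Dual 0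 1), (Dual 1 0, Dual 2 0, Dual 1 0), (Dual 1 0, Dual 2 0, Dual 2 0), (Dual 1 0, Dual 2 0, Dual 2 1), (Dual 1 0, Dual 2 0, Dual 2 2), (Dual 1 0, Dual 2 1, Dual 0 2), (Dual 1 0, Dual 2 1, Dual 1 2), (Dual 1 0, Dual 2 2, Dual 0 0), (Dual 1 0, Dual 2 2, Dual 1 1), (Dual 1 0, Dual 2 2, Dual 2 0), (Dual 1 0, Dual 2 2, Dual 2 1), (Dual 1 0, Dual 2 2, Dual 2 2), (Dual 0 0, Dual 1 0, Dual 0 1), (Dual 0 0, Dual 1 0, Dual 0 2), (Dual 0 0, Dual 1 0, Dual 1 2), (Dual 0 0, Dual 1 0, Dual 2 0), (Dual 0 1, Dual 1 0, Dual 0 0), (Dual 0 1, Dual 1 0, Dual 0 1), (Dual 0 1, Dual 1 0, Dual 1 0), (Dual 0 1, Dual 1 0, Dual 2 2), (Dual 0 2, Dual 1 0, Dual 0 0), (Dual 0 2, Dual 1 0, Dual 0 2), (Dual 0 2, Dual 1 0, Dual 1 1), (Dual 0 2, Dual 1 0, Dual 2 1), (Dual 0 0, Dual 0 0, Dual 1 0), (Dual 0 0, Dual 0 1, Dual 1 0), (Dual 0 0, Dual 0 2, Dual 1 0), (Dual 0 2, Dual 0 0, Dual 1 0), (Dual 0 2, Dual 0 1, Dual 1 0), (Dual 0 2, Dual 0 2, Dual 1 0)]"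

definition els3 :: "S3 list" where "els3 = [Dual a b. a \<leftarrow> [0,1,2], b \<leftarrow> [0,1,2]]"
definition nons3 :: "S3 list" where "nons3 = [Dual 0 0, Dual 0 1, Dual 0 2]"

lemma three_all: "(x::3) \<in> {0,1,2}"
proof -
  obtain z where z: "x = of_int z" "0 \<le> z" "z < int CARD(3)" by (rule bit1_cases)
  then have "z \<in> {0,1,2}" by auto
  then show ?thesis using z by auto
qed

lemma S3_all: "(x::S3) \<in> set els3"
proof (cases x)
  case (Dual a b)
  then show ?thesis using three_all[of a] three_all[of b] by (auto simp: els3_def)
qed

lemma S3_unit: "(x::S3) dvd 1 \<longleftrightarrow> re x \<noteq> 0"
proof
  assume "x dvd 1"
  then obtain k where k: "1 = x*k" by (rule dvdE)
  then have "1 = re x * re k" by (simp add: times_dual_def one_dual_def)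
  then show "re x \<noteq> 0" by auto
next
  assume a: "re x \<noteq> 0"
  have "re x * re x = 1" using three_all[of "re x"] a by auto
  then have "1 = x * Dual (re x) (- ep x)" by (simp add: times_dual_def one_dual_def algebra_simps)
  then show "x dvd 1" by (rule dvdI)
qed

lemma S3_t: "\<not> (x::S3) dvd 1 \<longrightarrow> x * Dual 0 1 = 0"
  by (simp add: S3_unit times_dual_def zero_dual_def)

lemma S3_nons: "\<not> (n::S3) dvd 1 \<longrightarrow> n \<in> set nons3"
proof
  assume "\<not> n dvd 1"
  then have "re n = 0" by (simp add: S3_unit)
  moreover have "n = Dual (re n) (ep n)" by simp
  ultimately show "n \<in> set nons3" using three_all[of "ep n"] by (auto simp: nons3_def)
qed

lemma S3_unit_Dual: "(Dual a b :: S3) dvd 1 \<longleftrightarrow> a \<noteq> 0"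
  by (simp add: S3_unit)

lemma S3_unit_Dual': "(Dual a b :: S3) dvd Dual 1 0 \<longleftrightarrow> a \<noteq> 0"
  using S3_unit_Dual[of a b] by (simp add: one_dual_def)

lemmas S3_simps = times_dual_def plus_dual_def zero_dual_def one_dual_def S3_unit_Dual S3_unit_Dual'

lemma BS3_nrm: "list_all nrm BS3"
  by (simp add: BS3_def nrm_def S3_simps)

lemma BS3_dist: "distinct BS3"
  by (simp add: BS3_def)

lemma BS3_cnt: "list_all (\<lambda>a. 5 \<le> length (filter (\<lambda>v. dot v a = 0) BS3)) (NLof els3 nons3)"
  by (simp add: BS3_def NLof_def els3_def nons3_def dot_def S3_simps)


lemma KS3_nrm: "list_all nrm KS3"
  by (simp add: KS3_def nrm_def S3_simps)

lemma KS3_dist: "distinct KS3"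
  by (simp add: KS3_def)

lemma KS3_cnt: "list_all (\<lambda>a. length (filter (\<lambda>v. dot v a = 0) KS3) \<le> 7) (NLof els3 nons3)"
  by (simp add: KS3_def NLof_def els3_def nons3_def dot_def S3_simps)

theorem theorem3p5:
  shows "(\<exists>B. blocking_set TYPE(Z9) B 57 5) \<and> (\<exists>K. proj_arc TYPE(Z9) K 60 7)
       \<and> (\<exists>B. blocking_set TYPE(S3) B 57 5) \<and> (\<exists>K. proj_arc TYPE(S3) K 60 7)"
proof -
  have t9: "(3::Z9) \<noteq> 0" by simp
  have tm9: "\<forall>x::Z9. \<not> x dvd 1 \<longrightarrow> x * 3 = 0" using Z9_t by blast
  have e9: "\<forall>x::Z9. x \<in> set els9" using Z9_all by blast
  have n9: "\<forall>n::Z9. \<not> n dvd 1 \<longrightarrow> n \<in> set nons9" using Z9_nons by blast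
  have t3: "(Dual 0 1 :: S3) \<noteq> 0" by (simp add: zero_dual_def)
  have tm3: "\<forall>x::S3. \<not> x dvd 1 \<longrightarrow> x * Dual 0 1 = 0" using S3_t by blast
  have e3: "\<forall>x::S3. x \<in> set els3" using S3_all by blast
  have n3: "\<forall>n::S3. \<not> n dvd 1 \<longrightarrow> n \<in> set nons3" using S3_nons by blast
  have b9: "blocking_set TYPE(Z9) (span1 ` set BZ9) (length BZ9) 5"
    by (rule blocking_generic[OF t9 tm9 e9 n9 BZ9_nrm BZ9_dist BZ9_cnt])
  have k9: "proj_arc TYPE(Z9) (span1 ` set KZ9) (length KZ9) 7"
    by (rule arc_generic[OF t9 tm9 e9 n9 KZ9_nrm KZ9_dist KZ9_cnt])
  have b3: "blocking_set TYPE(S3) (span1 ` set BS3) (length BS3) 5"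
    by (rule blocking_generic[OF t3 tm3 e3 n3 BS3_nrm BS3_dist BS3_cnt])
  have k3: "proj_arc TYPE(S3) (span1 ` set KS3) (length KS3) 7"
    by (rule arc_generic[OF t3 tm3 e3 n3 KS3_nrm KS3_dist KS3_cnt])
  have l: "length BZ9 = 57" "length KZ9 = 60" "length BS3 = 57" "length KS3 = 60"
    by (simp_all add: BZ9_def KZ9_def BS3_def KS3_def)
  show ?thesis using b9 k9 b3 k3 unfolding l by blast
qed

end
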